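(* Consider Plurality Voting (PV) used in every district. (Upper bounds.) For every district-based election with $m$ alternatives, $n$ voters and $k$ districts, every way of breaking ties (in the induced rankings, in the local plurality counts, and in the final weighted count), and every resulting election winner $a$, $$\frac{\max_j\mathrm{SW}(j\mid\mathbf v)}{\mathrm{SW}(a\mid\mathbf v)}\le \begin{cases} 1+\dfrac{3m^2k}{4} & \text{(symmetric)},\\[2mm] 1+\dfrac{m^2}{4}\left(\dfrac{3n+\max_d n_d}{\min_d n_d}-1\right) & \text{(unweighted)},\\[2mm] 1+m^2\left(\dfrac{n}{\min_d n_d}-\dfrac12\right) & \text{(unrestricted)}. \end{cases}$$ (Tightness.) (a) For all integers $m>k\ge2$ and district sizes $n_1,\dots,n_k$ (sum $n$) such that $n_1=\min_\ell n_\ell$ is divisible by $m$, $n_2=\max_\ell n_\ell$, and $n_\ell$ is even for $\ell\ge3$, there is an unweighted election with these district sizes and a tie resolution for which the ratio equals $1+\frac{m^2}{4}\left(\frac{3n+n_2}{n_1}-1\right)$; in particular, when $n_\ell=n/k$ for all $\ell$ with $n/k$ divisible by $m$ (and even if $k\ge3$), the symmetric bound $1+\frac{3m^2k}{4}$ is attained. (b) For all $m\ge2$, $k\ge2$ and district sizes whose minimum is divisible by $m$, there are positive weights, a valuation profile and a tie resolution for which the ratio equals $1+m^2\left(\frac{n}{\min_d n_d}-\frac12\right)$. Thus the distributed distortion of PV is exactly these three values.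
   Context: A district-based election consists of a set $\mathcal M$ of $m$ alternatives, a set $\mathcal N$ of $n$ voters, a partition $\mathcal D$ of $\mathcal N$ into $k$ nonempty districts (district $d$ has $n_d$ voters), positive weights $w_d$, and a valuation profile $\mathbf v$ with $v_{ij}\ge0$, $\sum_j v_{ij}=1$ for all $i$. Each voter's ranking is induced by her valuations ($j$ ranked above $j'$ only if $v_{ij}\ge v_{ij'}$), with ties among equal values broken arbitrarily. Plurality Voting elects, in a given set of voters, an alternative ranked first by the maximum number of voters (ties arbitrary). The local winner $j_d$ of district $d$ is the PV winner among voters of $d$; the election winner is any alternative in $\arg\max_j\sum_d w_d\mathbf 1[j=j_d]$. $\mathrm{SW}(j\mid\mathbf v)=\sum_i v_{ij}$. Symmetric: $n_d=n/k$, $w_d=1$; unweighted: $w_d=1$; unrestricted: arbitrary sizes and positive weights. Distributed distortion: supremum over elections of the class and all tie resolutions of $\max_j\mathrm{SW}(j\mid\mathbf v)/\mathrm{SW}(\text{winner}\mid\mathbf v)$. *)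

theory Defs
  imports Complex_Main
begin

text \<open>Alternatives are 0..<m, voters are 0..<n, districts are 0..<k.
  A district assignment dst maps each voter i<n to her district dst i < k.
  w d is the weight of district d, v i j the valuation of voter i for alternative j.\<close>

definition dsize :: "nat \<Rightarrow> (nat \<Rightarrow> nat) \<Rightarrow> nat \<Rightarrow> nat" where
  "dsize n dst d = card {i. i < n \<and> dst i = d}"

definition valid_election ::
  "nat \<Rightarrow> nat \<Rightarrow> nat \<Rightarrow> (nat \<Rightarrow> nat) \<Rightarrow> (nat \<Rightarrow> real) \<Rightarrow> (nat \<Rightarrow> nat \<Rightarrow> real) \<Rightarrow> bool" where
  "valid_election m n k dst w v \<longleftrightarrow>
     k \<ge> 1 \<and>
     (\<forall>i<n. dst i < k) \<and>
     (\<forall>d<k. \<exists>i<n. dst i = d) \<and>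
     (\<forall>d<k. w d > 0) \<and>
     (\<forall>i<n. \<forall>j<m. v i j \<ge> 0) \<and>
     (\<forall>i<n. (\<Sum>j<m. v i j) = 1)"

definition unweighted :: "nat \<Rightarrow> (nat \<Rightarrow> real) \<Rightarrow> bool" where
  "unweighted k w \<longleftrightarrow> (\<forall>d<k. w d = 1)"

definition symmetric :: "nat \<Rightarrow> nat \<Rightarrow> (nat \<Rightarrow> nat) \<Rightarrow> (nat \<Rightarrow> real) \<Rightarrow> bool" where
  "symmetric n k dst w \<longleftrightarrow> unweighted k w \<and> (\<forall>d<k. dsize n dst d * k = n)"

text \<open>Tie resolution in the induced rankings: tp i is a first-ranked alternative of voter i,
  i.e. any alternative of maximum value for i.\<close>
definition valid_top :: "nat \<Rightarrow> nat \<Rightarrow> (nat \<Rightarrow> nat \<Rightarrow> real) \<Rightarrow> (nat \<Rightarrow> nat) \<Rightarrow> bool" where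
  "valid_top m n v tp \<longleftrightarrow> (\<forall>i<n. tp i < m \<and> (\<forall>j<m. v i j \<le> v i (tp i)))"

definition pcount :: "nat \<Rightarrow> (nat \<Rightarrow> nat) \<Rightarrow> (nat \<Rightarrow> nat) \<Rightarrow> nat \<Rightarrow> nat \<Rightarrow> nat" where
  "pcount n dst tp d j = card {i. i < n \<and> dst i = d \<and> tp i = j}"

definition valid_local_winners ::
  "nat \<Rightarrow> nat \<Rightarrow> nat \<Rightarrow> (nat \<Rightarrow> nat) \<Rightarrow> (nat \<Rightarrow> nat) \<Rightarrow> (nat \<Rightarrow> nat) \<Rightarrow> bool" where
  "valid_local_winners m n k dst tp lw \<longleftrightarrow>
     (\<forall>d<k. lw d < m \<and> (\<forall>j<m. pcount n dst tp d j \<le> pcount n dst tp d (lw d)))"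

definition wscore :: "nat \<Rightarrow> (nat \<Rightarrow> real) \<Rightarrow> (nat \<Rightarrow> nat) \<Rightarrow> nat \<Rightarrow> real" where
  "wscore k w lw j = (\<Sum>d<k. if lw d = j then w d else 0)"

text \<open>A PV outcome: tie resolutions tp (rankings), lw (local counts), and election winner a
  (final weighted count).\<close>
definition pv_outcome ::
  "nat \<Rightarrow> nat \<Rightarrow> nat \<Rightarrow> (nat \<Rightarrow> nat) \<Rightarrow> (nat \<Rightarrow> real) \<Rightarrow> (nat \<Rightarrow> nat \<Rightarrow> real)
   \<Rightarrow> (nat \<Rightarrow> nat) \<Rightarrow> (nat \<Rightarrow> nat) \<Rightarrow> nat \<Rightarrow> bool" where
  "pv_outcome m n k dst w v tp lw a \<longleftrightarrow>
     valid_top m n v tp \<and> valid_local_winners m n k dst tp lw \<and>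
     a < m \<and> (\<forall>j<m. wscore k w lw j \<le> wscore k w lw a)"

definition SW :: "nat \<Rightarrow> (nat \<Rightarrow> nat \<Rightarrow> real) \<Rightarrow> nat \<Rightarrow> real" where
  "SW n v j = (\<Sum>i<n. v i j)"

definition ratio :: "nat \<Rightarrow> nat \<Rightarrow> (nat \<Rightarrow> nat \<Rightarrow> real) \<Rightarrow> nat \<Rightarrow> real" where
  "ratio m n v a = Max ((\<lambda>j. SW n v j) ` {..<m}) / SW n v a"

definition min_size :: "nat \<Rightarrow> nat \<Rightarrow> (nat \<Rightarrow> nat) \<Rightarrow> nat" where
  "min_size n k dst = Min ((\<lambda>d. dsize n dst d) ` {..<k})"

definition max_size :: "nat \<Rightarrow> nat \<Rightarrow> (nat \<Rightarrow> nat) \<Rightarrow> nat" where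
  "max_size n k dst = Max ((\<lambda>d. dsize n dst d) ` {..<k})"

end

theory Submission
  imports Defs
begin


definition Vd :: "nat \<Rightarrow> (nat \<Rightarrow> nat) \<Rightarrow> nat \<Rightarrow> nat set" where
  "Vd n dst d = {i. i < n \<and> dst i = d}"

lemma finite_Vd[simp]: "finite (Vd n dst d)"
  unfolding Vd_def by auto

lemma card_Vd: "card (Vd n dst d) = dsize n dst d"
  unfolding Vd_def dsize_def by simp

lemma voter_facts:
  assumes ve: "valid_election m n k dst w v" and vt: "valid_top m n v tp"
    and i: "i < n" and j: "j < m"
  shows "v i j \<le> v i (tp i)" "0 \<le> v i j" "v i j \<le> 1"
    "j \<noteq> tp i \<Longrightarrow> v i j \<le> 1/2" "1 \<le> real m * v i (tp i)" "tp i < m"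
proof -
  have tpm: "tp i < m" and mx: "\<forall>j<m. v i j \<le> v i (tp i)" using vt i unfolding valid_top_def by auto
  have nn: "\<forall>j<m. 0 \<le> v i j" and s1: "(\<Sum>j<m. v i j) = 1" using ve i unfolding valid_election_def by auto
  show "tp i < m" by fact
  show "v i j \<le> v i (tp i)" using mx j by auto
  show "0 \<le> v i j" using nn j by auto
  have "v i j = (\<Sum>j'\<in>{j}. v i j')" by simp
  also have "\<dots> \<le> (\<Sum>j'<m. v i j')" by (rule sum_mono2) (use j nn in auto)
  finally show "v i j \<le> 1" using s1 by simp
  show "v i j \<le> 1/2" if "j \<noteq> tp i"
  proof -
    have "v i j + v i (tp i) = (\<Sum>j'\<in>{j, tp i}. v i j')" using that by simp
    also have "\<dots> \<le> (\<Sum>j'<m. v i j')" by (rule sum_mono2) (use j tpm nn in auto)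
    finally have "v i j + v i (tp i) \<le> 1" using s1 by simp
    moreover have "v i j \<le> v i (tp i)" using mx j by auto
    ultimately show ?thesis by linarith
  qed
  have "1 = (\<Sum>j'<m. v i j')" using s1 by simp
  also have "\<dots> \<le> (\<Sum>j'<m. v i (tp i))" by (rule sum_mono) (use mx in auto)
  finally show "1 \<le> real m * v i (tp i)" by simp
qed

lemma sum_districts:
  assumes ve: "valid_election m n k dst w v"
  shows "(\<Sum>i<n. f i) = (\<Sum>d<k. \<Sum>i\<in>Vd n dst d. f i)"
proof -
  have "(\<Sum>d<k. \<Sum>i\<in>{x. x \<in> {..<n} \<and> dst x = d}. f i) = (\<Sum>i<n. f i)"
    by (rule sum.group) (use ve in \<open>auto simp: valid_election_def\<close>)
  moreover have "\<And>d. {x. x \<in> {..<n} \<and> dst x = d} = Vd n dst d" unfolding Vd_def by auto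
  ultimately show ?thesis by simp
qed

lemma sum_ind:
  "(\<Sum>i\<in>Vd n dst d. if tp i = j then (c::real) else 0) = c * real (pcount n dst tp d j)"
proof -
  have "(\<Sum>i\<in>Vd n dst d. if tp i = j then (c::real) else 0) = (\<Sum>i\<in>{x\<in>Vd n dst d. tp x = j}. c)"
    by (rule sym, rule sum.inter_filter) simp
  also have "{x\<in>Vd n dst d. tp x = j} = {i. i < n \<and> dst i = d \<and> tp i = j}" unfolding Vd_def by auto
  finally show ?thesis unfolding pcount_def by simp
qed

lemma pc_sum:
  assumes ve: "valid_election m n k dst w v" and vt: "valid_top m n v tp"
  shows "(\<Sum>j<m. pcount n dst tp d j) = dsize n dst d"
proof -
  have "(\<Sum>j<m. \<Sum>i\<in>{x. x \<in> Vd n dst d \<and> tp x = j}. (1::nat)) = (\<Sum>i\<in>Vd n dst d. 1)"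
    by (rule sum.group) (use vt in \<open>auto simp: valid_top_def Vd_def\<close>)
  moreover have "\<And>j. {x. x \<in> Vd n dst d \<and> tp x = j} = {i. i < n \<and> dst i = d \<and> tp i = j}" unfolding Vd_def by auto
  ultimately show ?thesis unfolding pcount_def by (simp add: card_Vd)
qed

lemma pc_winner:
  assumes ve: "valid_election m n k dst w v" and vt: "valid_top m n v tp"
    and lw: "valid_local_winners m n k dst tp lw" and d: "d < k"
  shows "dsize n dst d \<le> m * pcount n dst tp d (lw d)"
    "j < m \<Longrightarrow> pcount n dst tp d j \<le> pcount n dst tp d (lw d)"
    "j < m \<Longrightarrow> j \<noteq> lw d \<Longrightarrow> pcount n dst tp d j + pcount n dst tp d (lw d) \<le> dsize n dst d"
    "lw d < m"
proof -
  have le: "\<forall>j<m. pcount n dst tp d j \<le> pcount n dst tp d (lw d)" and lm: "lw d < m"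
    using lw d unfolding valid_local_winners_def by auto
  show "lw d < m" by fact
  show "j < m \<Longrightarrow> pcount n dst tp d j \<le> pcount n dst tp d (lw d)" using le by auto
  have "dsize n dst d = (\<Sum>j<m. pcount n dst tp d j)" using pc_sum[OF ve vt] by simp
  also have "\<dots> \<le> (\<Sum>j<m. pcount n dst tp d (lw d))" by (rule sum_mono) (use le in auto)
  finally show "dsize n dst d \<le> m * pcount n dst tp d (lw d)" by simp
  show "pcount n dst tp d j + pcount n dst tp d (lw d) \<le> dsize n dst d" if "j < m" "j \<noteq> lw d"
  proof -
    have "pcount n dst tp d j + pcount n dst tp d (lw d) = (\<Sum>j'\<in>{j, lw d}. pcount n dst tp d j')"
      using that by simp
    also have "\<dots> \<le> (\<Sum>j'<m. pcount n dst tp d j')" by (rule sum_mono2) (use that lm in auto)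
    finally show ?thesis using pc_sum[OF ve vt] by simp
  qed
qed

lemma sum_if_one: "(\<Sum>d<(k::nat). if P d then (1::real) else 0) = real (card {d. d < k \<and> P d})"
proof -
  have "(\<Sum>d<k. if P d then (1::real) else 0) = (\<Sum>d\<in>{x\<in>{..<k}. P x}. 1)"
    by (subst sum.inter_filter) auto
  also have "{x\<in>{..<k}. P x} = {d. d < k \<and> P d}" by auto
  finally show ?thesis by simp
qed

lemma dsize_pos:
  assumes ve: "valid_election m n k dst w v" and d: "d < k"
  shows "0 < dsize n dst d"
proof -
  obtain i where "i < n" "dst i = d" using ve d unfolding valid_election_def by auto
  then have "i \<in> Vd n dst d" unfolding Vd_def by auto
  then have "Vd n dst d \<noteq> {}" by auto
  then have "0 < card (Vd n dst d)" by (simp add: card_gt_0_iff)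
  then show ?thesis by (simp add: card_Vd)
qed

lemma sum_dsize:
  assumes ve: "valid_election m n k dst w v"
  shows "(\<Sum>d<k. real (dsize n dst d)) = real n"
  using sum_districts[OF ve, of "\<lambda>_. (1::real)"] by (simp add: card_Vd)

lemma dsize_le:
  "dsize n dst d \<le> n"
proof -
  have "card (Vd n dst d) \<le> card {..<n}" by (rule card_mono) (auto simp: Vd_def)
  then show ?thesis by (simp add: card_Vd)
qed

lemma dist_gen:
  assumes ve: "valid_election m n k dst w v" and vt: "valid_top m n v tp" and j: "j < m"
  shows "(\<Sum>i\<in>Vd n dst d. v i j) \<le> real (dsize n dst d) / 2 + real (pcount n dst tp d j) / 2"
proof -
  have "(\<Sum>i\<in>Vd n dst d. v i j) \<le> (\<Sum>i\<in>Vd n dst d. 1/2 + (if tp i = j then 1/2 else 0))"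
  proof (rule sum_mono)
    fix i assume "i \<in> Vd n dst d"
    then have i: "i < n" unfolding Vd_def by auto
    show "v i j \<le> 1/2 + (if tp i = j then 1/2 else 0)"
      using voter_facts[OF ve vt i j] by (cases "tp i = j") auto
  qed
  also have "\<dots> = real (dsize n dst d) / 2 + real (pcount n dst tp d j) / 2"
    by (simp add: sum.distrib sum_ind card_Vd)
  finally show ?thesis .
qed

definition Ad :: "nat \<Rightarrow> (nat \<Rightarrow> nat) \<Rightarrow> (nat \<Rightarrow> nat \<Rightarrow> real) \<Rightarrow> (nat \<Rightarrow> nat) \<Rightarrow> nat \<Rightarrow> nat \<Rightarrow> real" where
  "Ad n dst v tp d t = (\<Sum>i\<in>Vd n dst d. if tp i = t then v i t else 0)"

lemma dist_a:
  assumes ve: "valid_election m n k dst w v" and vt: "valid_top m n v tp" and j: "j < m"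
    and t: "t < m" and jt: "j \<noteq> t"
  shows "(\<Sum>i\<in>Vd n dst d. v i j) \<le> Ad n dst v tp d t + real (dsize n dst d) / 2
     + real (pcount n dst tp d j) / 2 - real (pcount n dst tp d t) / 2"
proof -
  have "(\<Sum>i\<in>Vd n dst d. v i j) \<le> (\<Sum>i\<in>Vd n dst d. (if tp i = t then v i t else 0) + 1/2
      + (if tp i = j then 1/2 else 0) + (if tp i = t then -1/2 else 0))"
  proof (rule sum_mono)
    fix i assume "i \<in> Vd n dst d"
    then have i: "i < n" unfolding Vd_def by auto
    show "v i j \<le> (if tp i = t then v i t else 0) + 1/2
      + (if tp i = j then 1/2 else 0) + (if tp i = t then -1/2 else 0)"
      using voter_facts[OF ve vt i j] jt by (cases "tp i = j"; cases "tp i = t") auto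
  qed
  also have "\<dots> = Ad n dst v tp d t + real (dsize n dst d) / 2
     + real (pcount n dst tp d j) / 2 - real (pcount n dst tp d t) / 2"
    by (simp add: sum.distrib sum_ind card_Vd Ad_def)
  finally show ?thesis .
qed

lemma A_lower:
  assumes ve: "valid_election m n k dst w v" and vt: "valid_top m n v tp" and t: "t < m"
  shows "real (pcount n dst tp d t) / real m \<le> Ad n dst v tp d t"
proof -
  have "(\<Sum>i\<in>Vd n dst d. if tp i = t then 1 / real m else 0) \<le> Ad n dst v tp d t"
    unfolding Ad_def
  proof (rule sum_mono)
    fix i assume "i \<in> Vd n dst d"
    then have i: "i < n" unfolding Vd_def by auto
    have m: "real m > 0" using t by simp
    have "tp i = t \<Longrightarrow> 1 / real m \<le> v i t" using voter_facts(5)[OF ve vt i t] m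
      by (simp add: divide_le_eq mult.commute)
    then show "(if tp i = t then 1 / real m else 0) \<le> (if tp i = t then v i t else 0)" by auto
  qed
  then show ?thesis by (simp add: sum_ind)
qed

lemma A_le_S:
  assumes ve: "valid_election m n k dst w v" and vt: "valid_top m n v tp" and t: "t < m"
  shows "Ad n dst v tp d t \<le> (\<Sum>i\<in>Vd n dst d. v i t)" "0 \<le> Ad n dst v tp d t"
    "0 \<le> (\<Sum>i\<in>Vd n dst d. v i t)"
proof -
  show "Ad n dst v tp d t \<le> (\<Sum>i\<in>Vd n dst d. v i t)" unfolding Ad_def
    by (rule sum_mono) (use voter_facts(2)[OF ve vt _ t] in \<open>auto simp: Vd_def\<close>)
  show "0 \<le> Ad n dst v tp d t" unfolding Ad_def
    by (rule sum_nonneg) (use voter_facts(2)[OF ve vt _ t] in \<open>auto simp: Vd_def\<close>)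
  show "0 \<le> (\<Sum>i\<in>Vd n dst d. v i t)"
    by (rule sum_nonneg) (use voter_facts(2)[OF ve vt _ t] in \<open>auto simp: Vd_def\<close>)
qed

lemma ratio_bound:
  assumes m: "a < m" and all: "\<forall>j<m. SW n v j \<le> SW n v a + X" and L: "L \<le> SW n v a" "0 < L"
    and X: "0 \<le> X"
  shows "ratio m n v a \<le> 1 + X / L"
proof -
  have "Max ((\<lambda>j. SW n v j) ` {..<m}) \<in> (\<lambda>j. SW n v j) ` {..<m}"
    by (rule Max_in) (use m in auto)
  then obtain j where j: "j < m" "Max ((\<lambda>j. SW n v j) ` {..<m}) = SW n v j" by auto
  have pos: "SW n v a > 0" using L by simp
  have "ratio m n v a = SW n v j / SW n v a" unfolding ratio_def using j by simp
  also have "\<dots> \<le> (SW n v a + X) / SW n v a" using all j pos by (simp add: divide_right_mono)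
  also have "\<dots> = 1 + X / SW n v a" using pos by (simp add: field_simps)
  also have "\<dots> \<le> 1 + X / L" using L X by (simp add: divide_left_mono)
  finally show ?thesis .
qed

lemma SW_split:
  assumes ve: "valid_election m n k dst w v"
  shows "SW n v j = (\<Sum>d<k. \<Sum>i\<in>Vd n dst d. v i j)"
  unfolding SW_def by (rule sum_districts[OF ve])

lemma min_size_facts:
  assumes ve: "valid_election m n k dst w v"
  shows "d < k \<Longrightarrow> min_size n k dst \<le> dsize n dst d" "0 < min_size n k dst"
    "d < k \<Longrightarrow> dsize n dst d \<le> max_size n k dst"
proof -
  have k: "k \<ge> 1" using ve unfolding valid_election_def by auto
  have "(0::nat) \<in> {..<k}" using k by simp
  then have ne: "{..<k} \<noteq> {}" by blast
  show "d < k \<Longrightarrow> min_size n k dst \<le> dsize n dst d" unfolding min_size_def by (rule Min_le) auto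
  show "d < k \<Longrightarrow> dsize n dst d \<le> max_size n k dst" unfolding max_size_def by (rule Max_ge) auto
  have "min_size n k dst \<in> (\<lambda>d. dsize n dst d) ` {..<k}" unfolding min_size_def
    by (rule Min_in) (use ne in auto)
  then show "0 < min_size n k dst" using dsize_pos[OF ve] by auto
qed

lemma winner_exists:
  assumes ve: "valid_election m n k dst w v" and po: "pv_outcome m n k dst w v tp lw a"
  shows "\<exists>d<k. lw d = a"
proof (rule ccontr)
  assume no: "\<not> (\<exists>d<k. lw d = a)"
  have k: "0 < k" and w0: "w 0 > 0" and wnn: "\<forall>d<k. 0 \<le> w d"
    using ve unfolding valid_election_def by auto
  have lwv: "valid_local_winners m n k dst tp lw" and amax: "\<forall>j<m. wscore k w lw j \<le> wscore k w lw a"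
    using po unfolding pv_outcome_def by auto
  have l0: "lw 0 < m" using lwv k unfolding valid_local_winners_def by auto
  have "w 0 \<le> wscore k w lw (lw 0)" unfolding wscore_def
    using member_le_sum[of 0 "{..<k}" "\<lambda>d. if lw d = lw 0 then w d else 0"] k wnn by auto
  also have "\<dots> \<le> wscore k w lw a" using amax l0 by auto
  also have "wscore k w lw a = 0" unfolding wscore_def using no by (intro sum.neutral) auto
  finally show False using w0 by simp
qed

theorem upper_unres:
  assumes ve: "valid_election m n k dst w v" and po: "pv_outcome m n k dst w v tp lw a"
  shows "ratio m n v a \<le> 1 + real m ^ 2 * (real n / real (min_size n k dst) - 1 / 2)"
proof -
  have vt: "valid_top m n v tp" and lwv: "valid_local_winners m n k dst tp lw" and am: "a < m"
    using po unfolding pv_outcome_def by auto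
  obtain d where d: "d < k" "lw d = a" using winner_exists[OF ve po] by auto
  define nd where "nd = real (dsize n dst d)"
  define A where "A = Ad n dst v tp d a"
  define X where "X = real n - nd / 2"
  have m0: "real m > 0" using am by simp
  have ndpos: "nd > 0" unfolding nd_def using dsize_pos[OF ve d(1)] by simp
  have ndn: "nd \<le> real n" unfolding nd_def using dsize_le by simp
  have pa: "nd \<le> real m * real (pcount n dst tp d a)" unfolding nd_def
    using pc_winner(1)[OF ve vt lwv d(1)] d(2) by (metis of_nat_le_iff of_nat_mult)
  have Alow: "real (pcount n dst tp d a) / real m \<le> A" unfolding A_def by (rule A_lower[OF ve vt am])
  have L: "nd / real m ^ 2 \<le> A"
  proof -
    have "nd / real m ^ 2 \<le> real m * real (pcount n dst tp d a) / real m ^ 2"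
      using pa m0 by (simp add: divide_right_mono)
    also have "\<dots> = real (pcount n dst tp d a) / real m" using m0 by (simp add: power2_eq_square)
    finally show ?thesis using Alow by simp
  qed
  have ASW: "A \<le> SW n v a"
  proof -
    have "A \<le> (\<Sum>i\<in>Vd n dst d. v i a)" unfolding A_def by (rule A_le_S(1)[OF ve vt am])
    also have "\<dots> \<le> (\<Sum>d'<k. \<Sum>i\<in>Vd n dst d'. v i a)"
      by (rule member_le_sum) (use d A_le_S(3)[OF ve vt am] in auto)
    finally show ?thesis using SW_split[OF ve] by simp
  qed
  have Xnn: "0 \<le> X" unfolding X_def using ndn ndpos by simp
  have all: "\<forall>j<m. SW n v j \<le> SW n v a + X"
  proof (intro allI impI)
    fix j assume j: "j < m"
    show "SW n v j \<le> SW n v a + X"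
    proof (cases "j = a")
      case True then show ?thesis using Xnn by simp
    next
      case False
      have "SW n v j = (\<Sum>d'<k. \<Sum>i\<in>Vd n dst d'. v i j)" by (rule SW_split[OF ve])
      also have "\<dots> \<le> (\<Sum>d'<k. real (dsize n dst d') + (if d' = d then A - nd / 2 else 0))"
      proof (rule sum_mono)
        fix d' assume d': "d' \<in> {..<k}"
        show "(\<Sum>i\<in>Vd n dst d'. v i j) \<le> real (dsize n dst d') + (if d' = d then A - nd / 2 else 0)"
        proof (cases "d' = d")
          case True
          have "pcount n dst tp d j \<le> pcount n dst tp d a" using pc_winner(2)[OF ve vt lwv d(1) j] d by simp
          then show ?thesis using True dist_a[OF ve vt j am False, of d] unfolding A_def nd_def by simp
        next
          case False
          have "(\<Sum>i\<in>Vd n dst d'. v i j) \<le> (\<Sum>i\<in>Vd n dst d'. 1)"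
            by (rule sum_mono) (use voter_facts(3)[OF ve vt _ j] in \<open>auto simp: Vd_def\<close>)
          then show ?thesis using False by (simp add: card_Vd)
        qed
      qed
      also have "\<dots> = real n + (A - nd / 2)" using d(1) by (simp add: sum.distrib sum_dsize[OF ve])
      also have "\<dots> \<le> SW n v a + X" using ASW unfolding X_def by simp
      finally show ?thesis .
    qed
  qed
  have Lpos: "0 < nd / real m ^ 2" using ndpos m0 by simp
  have "ratio m n v a \<le> 1 + X / (nd / real m ^ 2)"
    by (rule ratio_bound[OF am all _ Lpos Xnn]) (use L ASW in simp)
  also have "X / (nd / real m ^ 2) = real m ^ 2 * (real n / nd - 1 / 2)"
    unfolding X_def using ndpos by (simp add: field_simps)
  also have "\<dots> \<le> real m ^ 2 * (real n / real (min_size n k dst) - 1 / 2)"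
  proof -
    have mn: "0 < real (min_size n k dst)" "real (min_size n k dst) \<le> nd"
      using min_size_facts[OF ve] d(1) unfolding nd_def by auto
    have "real n / nd \<le> real n / real (min_size n k dst)"
      by (rule divide_left_mono) (use mn in auto)
    then show ?thesis by (simp add: mult_left_mono)
  qed
  finally show ?thesis by simp
qed

lemma final_arith:
  fixes n mn mx Na Nj t :: real
  assumes mn: "0 < mn" and t: "1 \<le> t" and Na: "t * mn \<le> Na" and Nj: "Nj \<le> t * mx"
    and n: "0 \<le> n" and mx: "0 \<le> mx"
  shows "(3 * n / 4 - Na / 4 + Nj / 4) / Na \<le> ((3 * n + mx) / mn - 1) / 4"
proof -
  have Napos: "0 < Na" using mn t Na by (smt (verit) mult_le_cancel_right1)
  have h1: "n * mn \<le> n * Na" using Na t mn n by (smt (verit) mult_le_cancel_right1 mult_left_mono)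
  have h2: "Nj * mn \<le> t * mx * mn" using Nj mn by (simp add: mult_right_mono)
  have h3: "t * mx * mn \<le> mx * Na" using Na mx by (metis mult.assoc mult.commute mult_left_mono)
  have "(3 * n - Na + Nj) * mn \<le> (3 * n + mx - mn) * Na"
    using h1 h2 h3 by (simp add: algebra_simps)
  then show ?thesis using Napos mn by (simp add: field_simps)
qed

theorem upper_unw:
  assumes ve: "valid_election m n k dst w v" and uw: "unweighted k w"
    and po: "pv_outcome m n k dst w v tp lw a"
  shows "ratio m n v a \<le> 1 + real m ^ 2 / 4 *
        ((3 * real n + real (max_size n k dst)) / real (min_size n k dst) - 1)"
proof -
  have vt: "valid_top m n v tp" and lwv: "valid_local_winners m n k dst tp lw" and am: "a < m"
    and amax: "\<forall>j<m. wscore k w lw j \<le> wscore k w lw a"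
    using po unfolding pv_outcome_def by auto
  have ws: "wscore k w lw x = real (card {d. d < k \<and> lw d = x})" for x
  proof -
    have "wscore k w lw x = (\<Sum>d<k. if lw d = x then (1::real) else 0)"
      unfolding wscore_def using uw unfolding unweighted_def by (intro sum.cong) auto
    then show ?thesis by (simp add: sum_if_one)
  qed
  define nd where "nd d = real (dsize n dst d)" for d
  define mn where "mn = real (min_size n k dst)"
  define mx where "mx = real (max_size n k dst)"
  define t where "t = real (card {d. d < k \<and> lw d = a})"
  define N where "N x = (\<Sum>d<k. if lw d = x then nd d else 0)" for x
  define AA where "AA = (\<Sum>d<k. if lw d = a then Ad n dst v tp d a else 0)"
  have m0: "real m > 0" using am by simp
  have mnpos: "0 < mn" unfolding mn_def using min_size_facts(2)[OF ve] by simp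
  have mnle: "d < k \<Longrightarrow> mn \<le> nd d" for d unfolding mn_def nd_def using min_size_facts(1)[OF ve] by simp
  have mxge: "d < k \<Longrightarrow> nd d \<le> mx" for d unfolding mx_def nd_def using min_size_facts(3)[OF ve] by simp
  have mxnn: "0 \<le> mx" unfolding mx_def by simp
  obtain d0 where d0: "d0 < k" "lw d0 = a" using winner_exists[OF ve po] by auto
  have t1: "1 \<le> t"
  proof -
    have "{d0} \<subseteq> {d. d < k \<and> lw d = a}" using d0 by auto
    then have "card {d0} \<le> card {d. d < k \<and> lw d = a}" by (rule card_mono[rotated]) simp
    then show ?thesis unfolding t_def by simp
  qed
  have Nset: "N x = (\<Sum>d\<in>{d. d < k \<and> lw d = x}. nd d)" for x
  proof -
    have "N x = (\<Sum>d\<in>{d\<in>{..<k}. lw d = x}. nd d)" unfolding N_def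
      by (subst sum.inter_filter) auto
    also have "{d\<in>{..<k}. lw d = x} = {d. d < k \<and> lw d = x}" by auto
    finally show ?thesis .
  qed
  have Na: "t * mn \<le> N a"
  proof -
    have "(\<Sum>d\<in>{d. d < k \<and> lw d = a}. mn) \<le> (\<Sum>d\<in>{d. d < k \<and> lw d = a}. nd d)"
      by (rule sum_mono) (use mnle in auto)
    then show ?thesis unfolding t_def Nset by (simp add: mult.commute)
  qed
  have Nj: "N j \<le> t * mx" if j: "j < m" for j
  proof -
    have "N j \<le> (\<Sum>d\<in>{d. d < k \<and> lw d = j}. mx)" unfolding Nset
      by (rule sum_mono) (use mxge in auto)
    also have "\<dots> = real (card {d. d < k \<and> lw d = j}) * mx" by simp
    also have "\<dots> \<le> t * mx" unfolding t_def using amax j ws mxnn by (simp add: mult_right_mono)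
    finally show ?thesis .
  qed
  have nnn: "0 \<le> real n" by simp
  have AAlow: "N a / real m ^ 2 \<le> AA"
  proof -
    have "N a / real m ^ 2 = (\<Sum>d<k. if lw d = a then nd d / real m ^ 2 else 0)"
      unfolding N_def sum_divide_distrib by (intro sum.cong) auto
    also have "\<dots> \<le> AA" unfolding AA_def
    proof (rule sum_mono)
      fix d assume d: "d \<in> {..<k}"
      have "nd d / real m ^ 2 \<le> Ad n dst v tp d a" if "lw d = a"
      proof -
        have pa: "nd d \<le> real m * real (pcount n dst tp d a)" unfolding nd_def
          using pc_winner(1)[OF ve vt lwv] d that by (metis lessThan_iff of_nat_le_iff of_nat_mult)
        have "nd d / real m ^ 2 \<le> real m * real (pcount n dst tp d a) / real m ^ 2"
          using pa m0 by (simp add: divide_right_mono)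
        also have "\<dots> = real (pcount n dst tp d a) / real m" using m0 by (simp add: power2_eq_square)
        also have "\<dots> \<le> Ad n dst v tp d a" by (rule A_lower[OF ve vt am])
        finally show ?thesis .
      qed
      then show "(if lw d = a then nd d / real m ^ 2 else 0) \<le> (if lw d = a then Ad n dst v tp d a else 0)"
        by auto
    qed
    finally show ?thesis .
  qed
  have AASW: "AA \<le> SW n v a"
  proof -
    have "AA \<le> (\<Sum>d<k. \<Sum>i\<in>Vd n dst d. v i a)" unfolding AA_def
      by (rule sum_mono) (use A_le_S[OF ve vt am] in auto)
    then show ?thesis using SW_split[OF ve] by simp
  qed
  have Nan: "N a \<le> real n"
  proof -
    have "N a \<le> (\<Sum>d<k. nd d)" unfolding N_def by (rule sum_mono) (auto simp: nd_def)
    then show ?thesis using sum_dsize[OF ve] unfolding nd_def by simp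
  qed
  have Napos: "0 < N a" using mnpos t1 Na by (smt (verit) mult_le_cancel_right1)
  have all: "SW n v j \<le> SW n v a + (3 * real n / 4 - N a / 4 + t * mx / 4)" if j: "j < m" for j
  proof (cases "j = a")
    case True
    have "0 \<le> t * mx" using t1 mxnn by simp
    then show ?thesis using True Nan by simp
  next
    case False
    have "SW n v j = (\<Sum>d<k. \<Sum>i\<in>Vd n dst d. v i j)" by (rule SW_split[OF ve])
    also have "\<dots> \<le> (\<Sum>d<k. (if lw d = a then Ad n dst v tp d a else 0) + 3 * nd d / 4
        - (if lw d = a then nd d / 4 else 0) + (if lw d = j then nd d / 4 else 0))"
    proof (rule sum_mono)
      fix d assume d: "d \<in> {..<k}"
      then have dk: "d < k" by simp
      have lwm: "lw d < m" using pc_winner(4)[OF ve vt lwv dk] .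
      have pcj: "pcount n dst tp d j \<le> pcount n dst tp d (lw d)" using pc_winner(2)[OF ve vt lwv dk j] .
      show "(\<Sum>i\<in>Vd n dst d. v i j) \<le> (if lw d = a then Ad n dst v tp d a else 0) + 3 * nd d / 4
        - (if lw d = a then nd d / 4 else 0) + (if lw d = j then nd d / 4 else 0)"
      proof (cases "lw d = a")
        case True
        then show ?thesis using dist_a[OF ve vt j am False, of d] pcj False unfolding nd_def by simp
      next
        case la: False
        show ?thesis
        proof (cases "lw d = j")
          case True
          have "pcount n dst tp d j \<le> dsize n dst d" using pc_sum[OF ve vt, of d] j
            by (metis member_le_sum finite_lessThan lessThan_iff zero_le)
          then show ?thesis using True la dist_gen[OF ve vt j, of d] unfolding nd_def by simp
        next
          case lj: False
          have "pcount n dst tp d j + pcount n dst tp d (lw d) \<le> dsize n dst d"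
            using pc_winner(3)[OF ve vt lwv dk j] lj by auto
          then have "2 * pcount n dst tp d j \<le> dsize n dst d" using pcj by simp
          then have "real (pcount n dst tp d j) \<le> nd d / 2" unfolding nd_def by linarith
          then show ?thesis using lj la dist_gen[OF ve vt j, of d] unfolding nd_def by simp
        qed
      qed
    qed
    also have "\<dots> = AA + 3 * real n / 4 - N a / 4 + N j / 4"
    proof -
      have e1: "(\<Sum>d<k. (if lw d = a then nd d / 4 else 0)) = N a / 4"
        unfolding N_def sum_divide_distrib by (intro sum.cong) auto
      have e2: "(\<Sum>d<k. (if lw d = j then nd d / 4 else 0)) = N j / 4"
        unfolding N_def sum_divide_distrib by (intro sum.cong) auto
      have "(\<Sum>d<k. 3 * nd d / 4) = 3 * (\<Sum>d<k. nd d) / 4"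
        by (simp add: sum_distrib_left sum_divide_distrib)
      then have e3: "(\<Sum>d<k. 3 * nd d / 4) = 3 * real n / 4"
        using sum_dsize[OF ve] unfolding nd_def by simp
      show ?thesis unfolding AA_def by (simp only: sum.distrib sum_subtractf e1 e2 e3)
    qed
    also have "\<dots> \<le> SW n v a + (3 * real n / 4 - N a / 4 + t * mx / 4)" using AASW Nj[OF j] by simp
    finally show ?thesis .
  qed
  have tmx: "0 \<le> t * mx" using t1 mxnn by simp
  have Xnn: "0 \<le> 3 * real n / 4 - N a / 4 + t * mx / 4" using Nan tmx by simp
  have Lpos: "0 < N a / real m ^ 2" using Napos m0 by simp
  have "ratio m n v a \<le> 1 + (3 * real n / 4 - N a / 4 + t * mx / 4) / (N a / real m ^ 2)"
    by (rule ratio_bound[OF am _ _ Lpos Xnn]) (use all AAlow AASW in auto)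
  also have "(3 * real n / 4 - N a / 4 + t * mx / 4) / (N a / real m ^ 2)
      = real m ^ 2 * ((3 * real n / 4 - N a / 4 + t * mx / 4) / N a)"
    using Napos m0 by (simp add: field_simps)
  also have "\<dots> \<le> real m ^ 2 * (((3 * real n + mx) / mn - 1) / 4)"
    by (rule mult_left_mono[OF final_arith[OF mnpos t1 Na order_refl nnn mxnn]]) simp
  finally show ?thesis unfolding mn_def mx_def by simp
qed

theorem upper_sym:
  assumes ve: "valid_election m n k dst w v" and sy: "symmetric n k dst w"
    and po: "pv_outcome m n k dst w v tp lw a"
  shows "ratio m n v a \<le> 1 + 3 * real m ^ 2 * real k / 4"
proof -
  have uw: "unweighted k w" and ds: "\<forall>d<k. dsize n dst d * k = n" using sy unfolding symmetric_def by auto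
  have k: "k \<ge> 1" using ve unfolding valid_election_def by auto
  have "(0::nat) \<in> {..<k}" using k by simp
  then have ne: "{..<k} \<noteq> {}" by blast
  have "min_size n k dst \<in> (\<lambda>d. dsize n dst d) ` {..<k}" unfolding min_size_def
    by (rule Min_in) (use ne in auto)
  then have mn: "min_size n k dst * k = n" using ds by auto
  have "max_size n k dst \<in> (\<lambda>d. dsize n dst d) ` {..<k}" unfolding max_size_def
    by (rule Max_in) (use ne in auto)
  then have mx: "max_size n k dst = min_size n k dst" using ds mn k
    by (metis imageE lessThan_iff mult_right_cancel not_one_le_zero)
  have mnp: "0 < real (min_size n k dst)" using min_size_facts(2)[OF ve] by simp
  have nn: "real n = real (min_size n k dst) * real k" using mn by (metis of_nat_mult)
  have "(3 * real n + real (max_size n k dst)) / real (min_size n k dst) - 1 = 3 * real k"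
    using mnp unfolding mx nn by (simp add: field_simps)
  then show ?thesis using upper_unw[OF ve uw po] by simp
qed



lemma sum_if_one_gen: "(\<Sum>d<(k::nat). if P d then (1::'a::comm_semiring_1) else 0) = of_nat (card {d. d < k \<and> P d})"
proof -
  have "(\<Sum>d<k. if P d then (1::'a) else 0) = (\<Sum>d\<in>{x\<in>{..<k}. P x}. 1)"
    by (subst sum.inter_filter) auto
  also have "{x\<in>{..<k}. P x} = {d. d < k \<and> P d}" by auto
  finally show ?thesis by simp
qed

lemma card_as_sum: "card {d. d < (k::nat) \<and> P d} = (\<Sum>d<k. if P d then 1 else 0)"
  using sum_if_one_gen[where k=k and P=P and 'a=nat] by simp

lemma sum_div_blocks:
  fixes f :: "nat \<Rightarrow> 'a::comm_semiring_1"
  shows "(\<Sum>p<m*q. f (p div q)) = of_nat q * (\<Sum>b<m. f b)"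
proof (cases "q = 0")
  case True then show ?thesis by simp
next
  case False
  have "(\<Sum>p<m*q. f (p div q)) = (\<Sum>x<m. \<Sum>p\<in>{x*q..<x*q+q}. f (p div q))"
    by (rule sum.nat_group[symmetric])
  also have "\<dots> = (\<Sum>x<m. \<Sum>p\<in>{x*q..<x*q+q}. f x)"
  proof (intro sum.cong refl)
    fix x p assume "p \<in> {x*q..<x*q+q}"
    then have "p div q = x" using False
      by (metis atLeastLessThan_iff div_nat_eqI mult.commute mult_Suc_right add.commute)
    then show "f (p div q) = f x" by simp
  qed
  also have "\<dots> = of_nat q * (\<Sum>b<m. f b)" by (simp add: sum_distrib_left)
  finally show ?thesis .
qed

lemma sum_mod2:
  fixes f :: "nat \<Rightarrow> 'a::comm_semiring_1"
  assumes "even s"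
  shows "(\<Sum>p<s. f (p mod 2)) = of_nat (s div 2) * (f 0 + f 1)"
proof -
  have s: "s = (s div 2) * 2" using assms by simp
  have "(\<Sum>p<s. f (p mod 2)) = (\<Sum>p<(s div 2) * 2. f (p mod 2))" using s by simp
  also have "\<dots> = (\<Sum>x<s div 2. \<Sum>p\<in>{x*2..<x*2+2}. f (p mod 2))"
    by (rule sum.nat_group[symmetric])
  also have "\<dots> = (\<Sum>x<s div 2. f 0 + f 1)"
  proof (intro sum.cong refl)
    fix x :: nat
    have "{x*2..<x*2+2} = {x*2, x*2+1}" by auto
    moreover have "Suc (x*2) mod 2 = 1" by presburger
    ultimately show "(\<Sum>p\<in>{x*2..<x*2+2}. f (p mod 2)) = f 0 + f 1" by simp
  qed
  finally show ?thesis by simp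
qed

lemma card_div_blocks:
  "card {p. p < m*q \<and> P (p div q)} = q * card {b. b < m \<and> P b}"
  unfolding card_as_sum using sum_div_blocks[where f="\<lambda>b. if P b then (1::nat) else 0" and m=m and q=q] by simp

lemma card_mod2:
  assumes "even s"
  shows "card {p. p < s \<and> P (p mod 2)} = (s div 2) * ((if P 0 then 1 else 0) + (if P 1 then 1 else 0))"
  unfolding card_as_sum using sum_mod2[OF assms, of "\<lambda>b. if P b then (1::nat) else 0"] by simp

definition layout :: "nat \<Rightarrow> nat \<Rightarrow> (nat \<Rightarrow> nat) \<Rightarrow> (nat \<Rightarrow> nat) \<Rightarrow> (nat \<Rightarrow> nat) \<Rightarrow> bool" where
  "layout n k s dst pos \<longleftrightarrow> bij_betw (\<lambda>i. (dst i, pos i)) {..<n} (SIGMA l:{..<k}. {..<s l})"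

lemma layout_exists: "\<exists>dst pos. layout (\<Sum>l<k. s l) k s dst pos"
proof -
  let ?M = "SIGMA l:{..<k}. {..<s l}"
  have fin: "finite ?M" by auto
  have c: "card ?M = (\<Sum>l<k. s l)" by simp
  obtain h where h: "bij_betw h {0..<card ?M} ?M" using ex_bij_betw_nat_finite[OF fin] by blast
  have "(\<lambda>i. (fst (h i), snd (h i))) = h" by auto
  then have "layout (\<Sum>l<k. s l) k s (\<lambda>i. fst (h i)) (\<lambda>i. snd (h i))"
    unfolding layout_def using h c by (simp add: atLeast0LessThan)
  then show ?thesis by blast
qed

lemma layout_range:
  assumes "layout n k s dst pos" "i < n"
  shows "dst i < k" "pos i < s (dst i)"
  using assms unfolding layout_def bij_betw_def by auto

lemma layout_sum:
  fixes F :: "nat \<Rightarrow> nat \<Rightarrow> 'a::comm_monoid_add"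
  assumes "layout n k s dst pos"
  shows "(\<Sum>i<n. F (dst i) (pos i)) = (\<Sum>l<k. \<Sum>p<s l. F l p)"
proof -
  have "(\<Sum>i<n. F (dst i) (pos i)) = (\<Sum>i<n. case_prod F (dst i, pos i))" by simp
  also have "\<dots> = (\<Sum>x\<in>(SIGMA l:{..<k}. {..<s l}). case_prod F x)"
    using sum.reindex_bij_betw[of "\<lambda>i. (dst i, pos i)" "{..<n}" "SIGMA l:{..<k}. {..<s l}" "case_prod F"]
      assms unfolding layout_def by simp
  also have "\<dots> = (\<Sum>l<k. \<Sum>p<s l. F l p)" by (rule sum.Sigma[symmetric]) auto
  finally show ?thesis .
qed

lemma layout_card:
  assumes L: "layout n k s dst pos" and d: "d < k"
  shows "card {i. i < n \<and> dst i = d \<and> Q (pos i)} = card {p. p < s d \<and> Q p}"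
proof -
  have "card {i. i < n \<and> dst i = d \<and> Q (pos i)} = (\<Sum>i<n. if dst i = d \<and> Q (pos i) then 1 else 0)"
    using card_as_sum[where k=n and P="\<lambda>i. dst i = d \<and> Q (pos i)"] by simp
  also have "\<dots> = (\<Sum>l<k. \<Sum>p<s l. if l = d \<and> Q p then 1 else 0)"
    by (rule layout_sum[OF L, of "\<lambda>l p. if l = d \<and> Q p then (1::nat) else 0"])
  also have "\<dots> = (\<Sum>l<k. if l = d then (\<Sum>p<s l. if Q p then 1 else 0) else 0)"
    by (intro sum.cong) auto
  also have "\<dots> = (\<Sum>p<s d. if Q p then 1 else 0)" using d by simp
  also have "\<dots> = card {p. p < s d \<and> Q p}" using card_as_sum[where k="s d" and P=Q] by simp
  finally show ?thesis .
qed

lemma layout_surj: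
  assumes L: "layout n k s dst pos" and d: "d < k" and p: "p < s d"
  shows "\<exists>i<n. dst i = d \<and> pos i = p"
proof -
  have "(d, p) \<in> (\<lambda>i. (dst i, pos i)) ` {..<n}" using L d p unfolding layout_def bij_betw_def by auto
  then show ?thesis by auto
qed

lemma layout_dsize:
  assumes L: "layout n k s dst pos" and d: "d < k"
  shows "dsize n dst d = s d"
  using layout_card[OF L d, of "\<lambda>_. True"] unfolding dsize_def by simp

lemma layout_pcount:
  assumes L: "layout n k s dst pos" and d: "d < k"
  shows "pcount n dst (\<lambda>i. T (dst i) (pos i)) d j = card {p. p < s d \<and> T d p = j}"
proof -
  have "{i. i < n \<and> dst i = d \<and> T (dst i) (pos i) = j} = {i. i < n \<and> dst i = d \<and> T d (pos i) = j}" by auto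
  then show ?thesis unfolding pcount_def using layout_card[OF L d, of "\<lambda>p. T d p = j"] by simp
qed

lemma layout_SW:
  assumes L: "layout n k s dst pos"
  shows "SW n (\<lambda>i j. V (dst i) (pos i) j) j = (\<Sum>l<k. \<Sum>p<s l. V l p j)"
  unfolding SW_def by (rule layout_sum[OF L])

lemma layout_valid:
  assumes L: "layout n k s dst pos" and k: "1 \<le> k" and s: "\<forall>l<k. 0 < s l"
    and w: "\<forall>d<k. 0 < w d"
    and Vnn: "\<And>l p j. l < k \<Longrightarrow> p < s l \<Longrightarrow> j < m \<Longrightarrow> 0 \<le> V l p j"
    and Vs: "\<And>l p. l < k \<Longrightarrow> p < s l \<Longrightarrow> (\<Sum>j<m. V l p j) = 1"
  shows "valid_election m n k dst w (\<lambda>i j. V (dst i) (pos i) j)"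
  unfolding valid_election_def
proof (intro conjI allI impI)
  show "1 \<le> k" by fact
  fix i assume "i < n"
  then show "dst i < k" using layout_range[OF L] by auto
next
  fix d assume d: "d < k"
  show "\<exists>i<n. dst i = d" using layout_surj[OF L d, of 0] s d by auto
next
  fix d assume "d < k" then show "0 < w d" using w by auto
next
  fix i j assume "i < n" "j < m"
  then show "0 \<le> V (dst i) (pos i) j" using Vnn layout_range[OF L] by auto
next
  fix i assume "i < n"
  then show "(\<Sum>j<m. V (dst i) (pos i) j) = 1" using Vs layout_range[OF L] by auto
qed

lemma layout_top:
  assumes L: "layout n k s dst pos"
    and T: "\<And>l p. l < k \<Longrightarrow> p < s l \<Longrightarrow> T l p < m \<and> (\<forall>j<m. V l p j \<le> V l p (T l p))"
  shows "valid_top m n (\<lambda>i j. V (dst i) (pos i) j) (\<lambda>i. T (dst i) (pos i))"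
  unfolding valid_top_def using T layout_range[OF L] by auto



definition gblk :: "nat \<Rightarrow> nat \<Rightarrow> nat \<Rightarrow> real" where
  "gblk m b j = (if b = 0 then 1 / real m else if b = 1 then (if j = 1 then 1 else 0)
      else (if j = b \<or> j = 1 then 1/2 else 0))"

lemma G1: "0 \<le> gblk m b j" unfolding gblk_def by auto

lemma G2: assumes "2 \<le> m" "b < m" shows "(\<Sum>j<m. gblk m b j) = 1"
proof -
  consider "b = 0" | "b = 1" | "2 \<le> b" by linarith
  then show ?thesis
  proof cases
    case 1 then show ?thesis using assms by (simp add: gblk_def)
  next
    case 2 then show ?thesis using assms by (simp add: gblk_def)
  next
    case 3
    have "(\<Sum>j<m. gblk m b j) = (\<Sum>j<m. (if j = b then 1/2 else 0) + (if j = 1 then 1/2 else 0))"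
      using 3 by (intro sum.cong) (auto simp: gblk_def)
    also have "\<dots> = 1" using assms 3 by (simp add: sum.distrib)
    finally show ?thesis .
  qed
qed

lemma G3: assumes "j < m" shows "gblk m b j \<le> gblk m b b"
  unfolding gblk_def by auto

lemma G4: "gblk m b j \<le> gblk m b 1"
  unfolding gblk_def by auto

lemma G5: "gblk m b 0 = (if b = 0 then 1 / real m else 0)"
  unfolding gblk_def by auto

lemma G6: assumes "2 \<le> m" shows "(\<Sum>b<m. gblk m b 1) = 1 / real m + real m / 2"
proof -
  have "(\<Sum>b<m. gblk m b 1) = (\<Sum>b<m. 1/2 + ((if b = 0 then 1 / real m - 1/2 else 0) + (if b = 1 then 1/2 else 0)))"
    by (intro sum.cong) (auto simp: gblk_def)
  also have "\<dots> = real m / 2 + 1 / real m" using assms by (simp add: sum.distrib)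
  finally show ?thesis by simp
qed

lemma G7: assumes "1 \<le> m" shows "(\<Sum>b<m. gblk m b 0) = 1 / real m"
  using assms by (simp add: G5)

lemma SP0: assumes "1 \<le> m" shows "(\<Sum>p<m*q. gblk m (p div q) 0) = real q / real m"
  using sum_div_blocks[where f="\<lambda>b. gblk m b 0" and m=m and q=q] G7[OF assms] by simp

lemma SP1: assumes "2 \<le> m" shows "(\<Sum>p<m*q. gblk m (p div q) 1) = real q * (1 / real m + real m / 2)"
  using sum_div_blocks[where f="\<lambda>b. gblk m b 1" and m=m and q=q] G6[OF assms] by simp

lemma SPc: "card {p. p < m*q \<and> p div q = j} = (if j < m then q else 0)"
proof -
  have "card {b. b < m \<and> b = j} = (if j < m then 1 else 0)"
  proof (cases "j < m")
    case True then have "{b. b < m \<and> b = j} = {j}" by auto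
    then show ?thesis using True by simp
  next
    case False then have "{b. b < m \<and> b = j} = {}" by auto
    then show ?thesis using False by simp
  qed
  then show ?thesis using card_div_blocks[where m=m and q=q and P="\<lambda>b. b = j"] by simp
qed

lemma div_lt: assumes "p < m*(q::nat)" shows "p div q < m"
  using assms by (cases "q = 0") (auto simp: div_less_iff_less_mult mult.commute)

lemma layout_pv_basic:
  assumes L: "layout n k s dst pos" and k: "1 \<le> k" and s: "\<forall>l<k. 0 < s l" and m: "2 \<le> m"
    and w: "\<forall>d<k. 0 < w d"
    and T: "\<And>l p. l < k \<Longrightarrow> p < s l \<Longrightarrow> T l p < m"
  shows "valid_election m n k dst w (\<lambda>i j. gblk m (T (dst i) (pos i)) j)"
    "valid_top m n (\<lambda>i j. gblk m (T (dst i) (pos i)) j) (\<lambda>i. T (dst i) (pos i))"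
    "\<forall>j<m. SW n (\<lambda>i j. gblk m (T (dst i) (pos i)) j) j \<le> SW n (\<lambda>i j. gblk m (T (dst i) (pos i)) j) 1"
proof -
  show "valid_election m n k dst w (\<lambda>i j. gblk m (T (dst i) (pos i)) j)"
    by (rule layout_valid[OF L k s w]) (use G1 G2[OF m] T in auto)
  show "valid_top m n (\<lambda>i j. gblk m (T (dst i) (pos i)) j) (\<lambda>i. T (dst i) (pos i))"
    by (rule layout_top[OF L]) (use G3 T in auto)
  show "\<forall>j<m. SW n (\<lambda>i j. gblk m (T (dst i) (pos i)) j) j \<le> SW n (\<lambda>i j. gblk m (T (dst i) (pos i)) j) 1"
    unfolding layout_SW[OF L, where V="\<lambda>l p j. gblk m (T l p) j"]
    by (intro allI impI sum_mono G4)
qed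

lemma ratio_dom:
  assumes "1 < m" "\<forall>j<m. SW n v j \<le> SW n v 1"
  shows "ratio m n v 0 = SW n v 1 / SW n v 0"
proof -
  have "Max ((\<lambda>j. SW n v j) ` {..<m}) = SW n v 1"
    by (rule Max_eqI) (use assms in auto)
  then show ?thesis unfolding ratio_def by simp
qed



lemma constr_a:
  assumes k2: "2 \<le> k" and km: "k < m" and s: "\<forall>l<k. 0 < s l" and dv: "m dvd s 0"
    and ev: "\<forall>l. 2 \<le> l \<and> l < k \<longrightarrow> even (s l)"
  shows "\<exists>dst w v tp lw a.
         valid_election m (\<Sum>l<k. s l) k dst w v \<and> unweighted k w \<and>
         (\<forall>l<k. dsize (\<Sum>l<k. s l) dst l = s l) \<and>
         pv_outcome m (\<Sum>l<k. s l) k dst w v tp lw a \<and>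
         ratio m (\<Sum>l<k. s l) v a =
           1 + real m ^ 2 / 4 * ((3 * real (\<Sum>l<k. s l) + real (s 1)) / real (s 0) - 1)"
proof -
  define n where "n = (\<Sum>l<k. s l)"
  define q where "q = s 0 div m"
  have m2: "2 \<le> m" using k2 km by simp
  have k1: "1 \<le> k" using k2 by simp
  have s0: "s 0 = m * q" unfolding q_def using dv by simp
  have qpos: "0 < q" using s0 s k2 by (metis gr0I mult_0_right not_numeral_le_zero le_zero_eq less_numeral_extra(3) zero_less_iff_neq_zero)
  obtain dst pos where L: "layout n k s dst pos" using layout_exists[where k=k and s=s] unfolding n_def by blast
  define T where "T l p = (if l = 0 then p div q else if l = 1 then 1 else if p mod 2 = 0 then l else 1)" for l p
  define v where "v = (\<lambda>i j. gblk m (T (dst i) (pos i)) j)"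
  define tp where "tp = (\<lambda>i. T (dst i) (pos i))"
  define W where "W = (\<lambda>_::nat. 1::real)"
  define lw where "lw = (\<lambda>d::nat. d)"
  have Tm: "T l p < m" if "l < k" "p < s l" for l p
  proof -
    have "p div q < m" if "l = 0" using div_lt[of p m q] \<open>p < s l\<close> s0 that by simp
    then show ?thesis unfolding T_def using \<open>l < k\<close> km m2 by auto
  qed
  have W: "\<forall>d<k. 0 < W d" unfolding W_def by simp
  note basic = layout_pv_basic[OF L k1 s m2 W Tm]
  have ve: "valid_election m n k dst W v" using basic(1) unfolding v_def .
  have vt: "valid_top m n v tp" using basic(2) unfolding v_def tp_def .
  have dom: "\<forall>j<m. SW n v j \<le> SW n v 1" using basic(3) unfolding v_def .
  have uw: "unweighted k W" unfolding unweighted_def W_def by simp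
  have ds: "\<forall>l<k. dsize n dst l = s l" using layout_dsize[OF L] by simp
  have pc: "pcount n dst tp d j = card {p. p < s d \<and> T d p = j}" if "d < k" for d j
    unfolding tp_def by (rule layout_pcount[OF L that])
  have lwv: "valid_local_winners m n k dst tp lw"
    unfolding valid_local_winners_def
  proof (intro allI impI conjI)
    fix d assume d: "d < k"
    show "lw d < m" unfolding lw_def using d km by simp
    fix j assume j: "j < m"
    show "pcount n dst tp d j \<le> pcount n dst tp d (lw d)"
      unfolding pc[OF d] lw_def
    proof -
      consider "d = 0" | "d = 1" | "2 \<le> d" by linarith
      then show "card {p. p < s d \<and> T d p = j} \<le> card {p. p < s d \<and> T d p = d}"
      proof cases
        case 1
        have "\<And>j. {p. p < s d \<and> T d p = j} = {p. p < m * q \<and> p div q = j}"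
          unfolding T_def using 1 s0 by auto
        then show ?thesis using SPc[of m q] m2 1 by simp
      next
        case 2
        have "{p. p < s d \<and> T d p = j} \<subseteq> {p. p < s d \<and> T d p = d}" unfolding T_def using 2 by auto
        then show ?thesis by (rule card_mono[rotated]) simp
      next
        case 3
        have e: "even (s d)" using ev 3 d by simp
        have c: "card {p. p < s d \<and> T d p = j'} = s d div 2 * ((if d = j' then 1 else 0) + (if 1 = j' then 1 else 0))" for j'
        proof -
          define P where "P y = ((if y = 0 then d else 1) = j')" for y :: nat
          have "{p. p < s d \<and> T d p = j'} = {p. p < s d \<and> P (p mod 2)}"
            unfolding T_def P_def using 3 by auto
          then have "card {p. p < s d \<and> T d p = j'} = s d div 2 * ((if P 0 then 1 else 0) + (if P 1 then 1 else 0))"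
            using card_mod2[OF e, of P] by simp
          then show ?thesis unfolding P_def by simp
        qed
        show ?thesis unfolding c using 3 by auto
      qed
    qed
  qed
  have ws: "wscore k W lw j = (if j < k then 1 else 0)" for j
    unfolding wscore_def W_def lw_def by simp
  have po: "pv_outcome m n k dst W v tp lw 0"
    unfolding pv_outcome_def using vt lwv ws m2 k2 by auto
  have SW0: "SW n v 0 = real q / real m"
  proof -
    have "SW n v 0 = (\<Sum>l<k. \<Sum>p<s l. gblk m (T l p) 0)" unfolding v_def by (rule layout_SW[OF L])
    also have "\<dots> = (\<Sum>l<k. if l = 0 then real q / real m else 0)"
    proof (intro sum.cong refl)
      fix l assume l: "l \<in> {..<k}"
      show "(\<Sum>p<s l. gblk m (T l p) 0) = (if l = 0 then real q / real m else 0)"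
      proof (cases "l = 0")
        case True
        then show ?thesis using SP0[of m q] m2 s0 unfolding T_def by simp
      next
        case False
        then have "\<And>p. T l p \<noteq> 0" unfolding T_def by auto
        then have Tn: "\<And>p. T l p \<noteq> 0" .
        have "(\<Sum>p<s l. gblk m (T l p) 0) = 0" by (intro sum.neutral ballI) (simp add: G5 Tn)
        then show ?thesis using False by simp
      qed
    qed
    also have "\<dots> = real q / real m" using k2 by simp
    finally show ?thesis .
  qed
  have SW1: "SW n v 1 = 3 * real n / 4 + (real q * (1 / real m + real m / 2) - 3 * real (s 0) / 4) + real (s 1) / 4"
  proof -
    have "SW n v 1 = (\<Sum>l<k. \<Sum>p<s l. gblk m (T l p) 1)" unfolding v_def by (rule layout_SW[OF L])
    also have "\<dots> = (\<Sum>l<k. 3 * real (s l) / 4 + (if l = 0 then real q * (1 / real m + real m / 2) - 3 * real (s 0) / 4 else 0)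
        + (if l = 1 then real (s 1) / 4 else 0))"
    proof (intro sum.cong refl)
      fix l assume l: "l \<in> {..<k}"
      consider "l = 0" | "l = 1" | "2 \<le> l" by linarith
      then show "(\<Sum>p<s l. gblk m (T l p) 1) = 3 * real (s l) / 4 + (if l = 0 then real q * (1 / real m + real m / 2) - 3 * real (s 0) / 4 else 0)
        + (if l = 1 then real (s 1) / 4 else 0)"
      proof cases
        case 1
        then show ?thesis using SP1[OF m2, of q] s0 unfolding T_def by simp
      next
        case 2
        then show ?thesis unfolding T_def by (simp add: gblk_def)
      next
        case 3
        have e: "even (s l)" using ev 3 l by simp
        define f where "f y = gblk m (if y = 0 then l else 1) 1" for y :: nat
        have "(\<Sum>p<s l. gblk m (T l p) 1) = (\<Sum>p<s l. f (p mod 2))"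
          unfolding T_def f_def using 3 by (intro sum.cong) auto
        also have "\<dots> = real (s l div 2) * (f 0 + f 1)" by (rule sum_mod2[OF e])
        also have "\<dots> = real (s l div 2) * (gblk m l 1 + gblk m 1 1)" unfolding f_def by simp
        also have "\<dots> = real (s l) / 2 * (1/2 + 1)" using 3 e by (simp add: gblk_def real_of_nat_div)
        finally show ?thesis using 3 by simp
      qed
    qed
    also have "\<dots> = 3 * real n / 4 + (real q * (1 / real m + real m / 2) - 3 * real (s 0) / 4) + real (s 1) / 4"
      using k2 unfolding n_def by (simp add: sum.distrib sum_divide_distrib[symmetric] sum_distrib_left[symmetric])
    finally show ?thesis .
  qed
  have mpos: "0 < real m" using m2 by simp
  have "ratio m n v 0 = SW n v 1 / SW n v 0" by (rule ratio_dom) (use m2 dom in auto)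
  also have "\<dots> = 1 + real m ^ 2 / 4 * ((3 * real n + real (s 1)) / real (s 0) - 1)"
    unfolding SW0 SW1 s0 using qpos mpos by (simp add: field_simps power2_eq_square)
  finally have "ratio m n v 0 = 1 + real m ^ 2 / 4 * ((3 * real n + real (s 1)) / real (s 0) - 1)" .
  then show ?thesis using ve uw ds po unfolding n_def by blast
qed



lemma constr_b:
  assumes m2: "2 \<le> m" and k2: "2 \<le> k" and s: "\<forall>l<k. 0 < s l" and dv: "m dvd Min (s ` {..<k})"
  shows "\<exists>dst w v tp lw a.
         valid_election m (\<Sum>l<k. s l) k dst w v \<and>
         (\<forall>l<k. dsize (\<Sum>l<k. s l) dst l = s l) \<and>
         pv_outcome m (\<Sum>l<k. s l) k dst w v tp lw a \<and>
         ratio m (\<Sum>l<k. s l) v a =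
           1 + real m ^ 2 * (real (\<Sum>l<k. s l) / real (Min (s ` {..<k})) - 1 / 2)"
proof -
  define n where "n = (\<Sum>l<k. s l)"
  have k1: "1 \<le> k" using k2 by simp
  have "(0::nat) \<in> {..<k}" using k1 by simp
  then have ne: "{..<k} \<noteq> {}" by blast
  have "Min (s ` {..<k}) \<in> s ` {..<k}" by (rule Min_in) (use ne in auto)
  then obtain d0 where d0: "d0 < k" "s d0 = Min (s ` {..<k})" by auto
  define q where "q = s d0 div m"
  have s0: "s d0 = m * q" unfolding q_def using dv d0 by simp
  have qpos: "0 < q" using s0 s d0 by (metis gr0I mult_0_right less_irrefl)
  obtain dst pos where L: "layout n k s dst pos" using layout_exists[where k=k and s=s] unfolding n_def by blast
  define T where "T l p = (if l = d0 then p div q else 1)" for l p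
  define v where "v = (\<lambda>i j. gblk m (T (dst i) (pos i)) j)"
  define tp where "tp = (\<lambda>i. T (dst i) (pos i))"
  define W where "W = (\<lambda>d::nat. if d = d0 then real k else 1)"
  define lw where "lw = (\<lambda>d::nat. if d = d0 then 0 else (1::nat))"
  have Tm: "T l p < m" if "l < k" "p < s l" for l p
  proof -
    have "p div q < m" if "l = d0" using div_lt[of p m q] \<open>p < s l\<close> s0 that by simp
    then show ?thesis unfolding T_def using m2 by auto
  qed
  have W: "\<forall>d<k. 0 < W d" unfolding W_def using k1 by simp
  note basic = layout_pv_basic[OF L k1 s m2 W Tm]
  have ve: "valid_election m n k dst W v" using basic(1) unfolding v_def .
  have vt: "valid_top m n v tp" using basic(2) unfolding v_def tp_def .
  have dom: "\<forall>j<m. SW n v j \<le> SW n v 1" using basic(3) unfolding v_def .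
  have ds: "\<forall>l<k. dsize n dst l = s l" using layout_dsize[OF L] by simp
  have pc: "pcount n dst tp d j = card {p. p < s d \<and> T d p = j}" if "d < k" for d j
    unfolding tp_def by (rule layout_pcount[OF L that])
  have lwv: "valid_local_winners m n k dst tp lw"
    unfolding valid_local_winners_def
  proof (intro allI impI conjI)
    fix d assume d: "d < k"
    show "lw d < m" unfolding lw_def using m2 by simp
    fix j assume j: "j < m"
    show "pcount n dst tp d j \<le> pcount n dst tp d (lw d)"
      unfolding pc[OF d]
    proof (cases "d = d0")
      case True
      have "\<And>j. {p. p < s d \<and> T d p = j} = {p. p < m * q \<and> p div q = j}"
        unfolding T_def using True s0 by auto
      then show "card {p. p < s d \<and> T d p = j} \<le> card {p. p < s d \<and> T d p = lw d}"
        using SPc[of m q] m2 True unfolding lw_def by simp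
    next
      case False
      have "{p. p < s d \<and> T d p = j} \<subseteq> {p. p < s d \<and> T d p = lw d}" unfolding T_def lw_def using False by auto
      then show "card {p. p < s d \<and> T d p = j} \<le> card {p. p < s d \<and> T d p = lw d}"
        by (rule card_mono[rotated]) simp
    qed
  qed
  have ws0: "wscore k W lw 0 = real k"
  proof -
    have "wscore k W lw 0 = (\<Sum>d<k. if d = d0 then real k else 0)"
      unfolding wscore_def W_def lw_def by (intro sum.cong) auto
    then show ?thesis using d0 by simp
  qed
  have wsj: "wscore k W lw j \<le> real k" for j
  proof (cases "j = 0")
    case True then show ?thesis using ws0 by simp
  next
    case False
    have "wscore k W lw j \<le> (\<Sum>d<k. 1)" unfolding wscore_def W_def lw_def
      by (rule sum_mono) (use False in auto)
    then show ?thesis by simp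
  qed
  have po: "pv_outcome m n k dst W v tp lw 0"
    unfolding pv_outcome_def using vt lwv ws0 wsj m2 by auto
  have SW0: "SW n v 0 = real q / real m"
  proof -
    have "SW n v 0 = (\<Sum>l<k. \<Sum>p<s l. gblk m (T l p) 0)" unfolding v_def by (rule layout_SW[OF L])
    also have "\<dots> = (\<Sum>l<k. if l = d0 then real q / real m else 0)"
    proof (intro sum.cong refl)
      fix l assume l: "l \<in> {..<k}"
      show "(\<Sum>p<s l. gblk m (T l p) 0) = (if l = d0 then real q / real m else 0)"
      proof (cases "l = d0")
        case True
        then show ?thesis using SP0[of m q] m2 s0 unfolding T_def by simp
      next
        case False
        then have Tn: "\<And>p. T l p \<noteq> 0" unfolding T_def by auto
        have "(\<Sum>p<s l. gblk m (T l p) 0) = 0" by (intro sum.neutral ballI) (simp add: G5 Tn)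
        then show ?thesis using False by simp
      qed
    qed
    also have "\<dots> = real q / real m" using d0 by simp
    finally show ?thesis .
  qed
  have SW1: "SW n v 1 = real n + (real q * (1 / real m + real m / 2) - real (s d0))"
  proof -
    have "SW n v 1 = (\<Sum>l<k. \<Sum>p<s l. gblk m (T l p) 1)" unfolding v_def by (rule layout_SW[OF L])
    also have "\<dots> = (\<Sum>l<k. real (s l) + (if l = d0 then real q * (1 / real m + real m / 2) - real (s d0) else 0))"
    proof (intro sum.cong refl)
      fix l assume l: "l \<in> {..<k}"
      show "(\<Sum>p<s l. gblk m (T l p) 1) = real (s l) + (if l = d0 then real q * (1 / real m + real m / 2) - real (s d0) else 0)"
      proof (cases "l = d0")
        case True
        then show ?thesis using SP1[OF m2, of q] s0 unfolding T_def by simp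
      next
        case False
        then show ?thesis unfolding T_def by (simp add: gblk_def)
      qed
    qed
    also have "\<dots> = real n + (real q * (1 / real m + real m / 2) - real (s d0))"
      using d0 unfolding n_def by (simp add: sum.distrib)
    finally show ?thesis .
  qed
  have mpos: "0 < real m" using m2 by simp
  have "ratio m n v 0 = SW n v 1 / SW n v 0" by (rule ratio_dom) (use m2 dom in auto)
  also have "\<dots> = 1 + real m ^ 2 * (real n / real (s d0) - 1 / 2)"
    unfolding SW0 SW1 s0 using qpos mpos by (simp add: field_simps power2_eq_square)
  finally have "ratio m n v 0 = 1 + real m ^ 2 * (real n / real (Min (s ` {..<k})) - 1 / 2)"
    using d0 by simp
  then show ?thesis using ve ds po unfolding n_def by blast
qed

lemma constr_sym:
  assumes k2: "2 \<le> k" and km: "k < m" and q: "0 < q" and dv: "m dvd q" and ev: "3 \<le> k \<longrightarrow> even q"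
  shows "\<exists>dst w v tp lw a.
         valid_election m (k * q) k dst w v \<and> symmetric (k * q) k dst w \<and>
         pv_outcome m (k * q) k dst w v tp lw a \<and>
         ratio m (k * q) v a = 1 + 3 * real m ^ 2 * real k / 4"
proof -
  have "\<exists>dst w v tp lw a.
         valid_election m (\<Sum>l<k. q) k dst w v \<and> unweighted k w \<and>
         (\<forall>l<k. dsize (\<Sum>l<k. q) dst l = q) \<and>
         pv_outcome m (\<Sum>l<k. q) k dst w v tp lw a \<and>
         ratio m (\<Sum>l<k. q) v a =
           1 + real m ^ 2 / 4 * ((3 * real (\<Sum>l<k. q) + real q) / real q - 1)"
    using constr_a[where s="\<lambda>_. q" and k=k and m=m] k2 km q dv ev by auto
  then obtain dst w v tp lw a where
    h: "valid_election m (k * q) k dst w v" "unweighted k w" "\<forall>l<k. dsize (k * q) dst l = q"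
       "pv_outcome m (k * q) k dst w v tp lw a"
       "ratio m (k * q) v a = 1 + real m ^ 2 / 4 * ((3 * real (k * q) + real q) / real q - 1)"
    by (auto simp: mult.commute)
  have "1 + real m ^ 2 / 4 * ((3 * real (k * q) + real q) / real q - 1) = 1 + 3 * real m ^ 2 * real k / 4"
    using q by (simp add: field_simps)
  moreover have "symmetric (k * q) k dst w" unfolding symmetric_def using h(2,3) by (simp add: mult.commute)
  ultimately show ?thesis using h by metis
qed


theorem theorem3:
  shows
  \<comment> \<open>Upper bound, symmetric\<close>
  "(\<forall>m n k dst w v tp lw a.
      valid_election m n k dst w v \<and> symmetric n k dst w \<and>
      pv_outcome m n k dst w v tp lw a \<longrightarrow>
      ratio m n v a \<le> 1 + 3 * real m ^ 2 * real k / 4)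
   \<and>
  \<comment> \<open>Upper bound, unweighted\<close>
   (\<forall>m n k dst w v tp lw a.
      valid_election m n k dst w v \<and> unweighted k w \<and>
      pv_outcome m n k dst w v tp lw a \<longrightarrow>
      ratio m n v a \<le> 1 + real m ^ 2 / 4 *
        ((3 * real n + real (max_size n k dst)) / real (min_size n k dst) - 1))
   \<and>
  \<comment> \<open>Upper bound, unrestricted\<close>
   (\<forall>m n k dst w v tp lw a.
      valid_election m n k dst w v \<and>
      pv_outcome m n k dst w v tp lw a \<longrightarrow>
      ratio m n v a \<le> 1 + real m ^ 2 * (real n / real (min_size n k dst) - 1 / 2))
   \<and>
  \<comment> \<open>Tightness (a), unweighted; district 0 has minimum size, district 1 maximum size\<close>
   (\<forall>m k (s :: nat \<Rightarrow> nat).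
      2 \<le> k \<and> k < m \<and> (\<forall>l<k. 0 < s l) \<and>
      s 0 = Min (s ` {..<k}) \<and> m dvd s 0 \<and> s 1 = Max (s ` {..<k}) \<and>
      (\<forall>l. 2 \<le> l \<and> l < k \<longrightarrow> even (s l)) \<longrightarrow>
      (\<exists>dst w v tp lw a.
         valid_election m (\<Sum>l<k. s l) k dst w v \<and> unweighted k w \<and>
         (\<forall>l<k. dsize (\<Sum>l<k. s l) dst l = s l) \<and>
         pv_outcome m (\<Sum>l<k. s l) k dst w v tp lw a \<and>
         ratio m (\<Sum>l<k. s l) v a =
           1 + real m ^ 2 / 4 * ((3 * real (\<Sum>l<k. s l) + real (s 1)) / real (s 0) - 1)))
   \<and>
  \<comment> \<open>Tightness (a), symmetric special case: all districts of size q = n/k\<close>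
   (\<forall>m k q.
      2 \<le> k \<and> k < m \<and> 0 < q \<and> m dvd q \<and> (3 \<le> k \<longrightarrow> even q) \<longrightarrow>
      (\<exists>dst w v tp lw a.
         valid_election m (k * q) k dst w v \<and> symmetric (k * q) k dst w \<and>
         pv_outcome m (k * q) k dst w v tp lw a \<and>
         ratio m (k * q) v a = 1 + 3 * real m ^ 2 * real k / 4))
   \<and>
  \<comment> \<open>Tightness (b), unrestricted\<close>
   (\<forall>m k (s :: nat \<Rightarrow> nat).
      2 \<le> m \<and> 2 \<le> k \<and> (\<forall>l<k. 0 < s l) \<and> m dvd Min (s ` {..<k}) \<longrightarrow>
      (\<exists>dst w v tp lw a.
         valid_election m (\<Sum>l<k. s l) k dst w v \<and>
         (\<forall>l<k. dsize (\<Sum>l<k. s l) dst l = s l) \<and>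
         pv_outcome m (\<Sum>l<k. s l) k dst w v tp lw a \<and>
         ratio m (\<Sum>l<k. s l) v a =
           1 + real m ^ 2 * (real (\<Sum>l<k. s l) / real (Min (s ` {..<k})) - 1 / 2)))"
proof (intro conjI)
  show "\<forall>m n k dst w v tp lw a.
      valid_election m n k dst w v \<and> symmetric n k dst w \<and>
      pv_outcome m n k dst w v tp lw a \<longrightarrow>
      ratio m n v a \<le> 1 + 3 * real m ^ 2 * real k / 4"
    using upper_sym by blast
  show "\<forall>m n k dst w v tp lw a.
      valid_election m n k dst w v \<and> unweighted k w \<and>
      pv_outcome m n k dst w v tp lw a \<longrightarrow>
      ratio m n v a \<le> 1 + real m ^ 2 / 4 *
        ((3 * real n + real (max_size n k dst)) / real (min_size n k dst) - 1)"
    using upper_unw by blast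
  show "\<forall>m n k dst w v tp lw a.
      valid_election m n k dst w v \<and>
      pv_outcome m n k dst w v tp lw a \<longrightarrow>
      ratio m n v a \<le> 1 + real m ^ 2 * (real n / real (min_size n k dst) - 1 / 2)"
    using upper_unres by blast
next
  show "\<forall>m k (s :: nat \<Rightarrow> nat).
      2 \<le> k \<and> k < m \<and> (\<forall>l<k. 0 < s l) \<and>
      s 0 = Min (s ` {..<k}) \<and> m dvd s 0 \<and> s 1 = Max (s ` {..<k}) \<and>
      (\<forall>l. 2 \<le> l \<and> l < k \<longrightarrow> even (s l)) \<longrightarrow>
      (\<exists>dst w v tp lw a.
         valid_election m (\<Sum>l<k. s l) k dst w v \<and> unweighted k w \<and>
         (\<forall>l<k. dsize (\<Sum>l<k. s l) dst l = s l) \<and>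
         pv_outcome m (\<Sum>l<k. s l) k dst w v tp lw a \<and>
         ratio m (\<Sum>l<k. s l) v a =
           1 + real m ^ 2 / 4 * ((3 * real (\<Sum>l<k. s l) + real (s 1)) / real (s 0) - 1))"
  proof (intro allI impI)
    fix m k and s :: "nat \<Rightarrow> nat"
    assume h: "2 \<le> k \<and> k < m \<and> (\<forall>l<k. 0 < s l) \<and>
      s 0 = Min (s ` {..<k}) \<and> m dvd s 0 \<and> s 1 = Max (s ` {..<k}) \<and>
      (\<forall>l. 2 \<le> l \<and> l < k \<longrightarrow> even (s l))"
    show "\<exists>dst w v tp lw a.
         valid_election m (\<Sum>l<k. s l) k dst w v \<and> unweighted k w \<and>
         (\<forall>l<k. dsize (\<Sum>l<k. s l) dst l = s l) \<and>
         pv_outcome m (\<Sum>l<k. s l) k dst w v tp lw a \<and>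
         ratio m (\<Sum>l<k. s l) v a =
           1 + real m ^ 2 / 4 * ((3 * real (\<Sum>l<k. s l) + real (s 1)) / real (s 0) - 1)"
      by (rule constr_a) (use h in auto)
  qed
next
  show "\<forall>m k q.
      2 \<le> k \<and> k < m \<and> 0 < q \<and> m dvd q \<and> (3 \<le> k \<longrightarrow> even q) \<longrightarrow>
      (\<exists>dst w v tp lw a.
         valid_election m (k * q) k dst w v \<and> symmetric (k * q) k dst w \<and>
         pv_outcome m (k * q) k dst w v tp lw a \<and>
         ratio m (k * q) v a = 1 + 3 * real m ^ 2 * real k / 4)"
  proof (intro allI impI)
    fix m k q :: nat
    assume h: "2 \<le> k \<and> k < m \<and> 0 < q \<and> m dvd q \<and> (3 \<le> k \<longrightarrow> even q)"
    show "\<exists>dst w v tp lw a.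
         valid_election m (k * q) k dst w v \<and> symmetric (k * q) k dst w \<and>
         pv_outcome m (k * q) k dst w v tp lw a \<and>
         ratio m (k * q) v a = 1 + 3 * real m ^ 2 * real k / 4"
      by (rule constr_sym) (use h in auto)
  qed
next
  show "\<forall>m k (s :: nat \<Rightarrow> nat).
      2 \<le> m \<and> 2 \<le> k \<and> (\<forall>l<k. 0 < s l) \<and> m dvd Min (s ` {..<k}) \<longrightarrow>
      (\<exists>dst w v tp lw a.
         valid_election m (\<Sum>l<k. s l) k dst w v \<and>
         (\<forall>l<k. dsize (\<Sum>l<k. s l) dst l = s l) \<and>
         pv_outcome m (\<Sum>l<k. s l) k dst w v tp lw a \<and>
         ratio m (\<Sum>l<k. s l) v a =
           1 + real m ^ 2 * (real (\<Sum>l<k. s l) / real (Min (s ` {..<k})) - 1 / 2))"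
  proof (intro allI impI)
    fix m k and s :: "nat \<Rightarrow> nat"
    assume h: "2 \<le> m \<and> 2 \<le> k \<and> (\<forall>l<k. 0 < s l) \<and> m dvd Min (s ` {..<k})"
    show "\<exists>dst w v tp lw a.
         valid_election m (\<Sum>l<k. s l) k dst w v \<and>
         (\<forall>l<k. dsize (\<Sum>l<k. s l) dst l = s l) \<and>
         pv_outcome m (\<Sum>l<k. s l) k dst w v tp lw a \<and>
         ratio m (\<Sum>l<k. s l) v a =
           1 + real m ^ 2 * (real (\<Sum>l<k. s l) / real (Min (s ` {..<k})) - 1 / 2)"
      by (rule constr_b) (use h in auto)
  qed
qed

end
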